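(* Let $X$ be a commutative topological free algebra over $\mathbb{K}$ having a set of free generators of infinite cardinality $\alpha$, and suppose $w(X)\le\alpha$. Then there is a family $\{Y_\kappa\}_{\kappa<\alpha}$ of subalgebras of $X$ such that: (1) each $Y_\kappa$ is a dense subalgebra of $X$ of the form $Y_\kappa=\langle F_\kappa\rangle$ with $F_\kappa$ a set of free generators of cardinality $\alpha$; (2) the family is algebraically independent, i.e., the $F_\kappa$ can be chosen pairwise disjoint with $\bigcup_{\kappa<\alpha}F_\kappa$ a set of free generators (in particular $Y_{\kappa_1}\cap Y_{\kappa_2}=\{0\}$ for $\kappa_1\neq\kappa_2$).
   Context: Algebras are associative linear algebras over $\mathbb{K}$ ($\mathbb{R}$ or $\mathbb{C}$); a topological algebra is an algebra with a topology making sum, product and scalar multiplication continuous. $w(X)$ is the smallest cardinality of a base of the topology. $\langle S\rangle$ denotes the subalgebra generated by $S$. With $\mathbb{P}_n$ the polynomials in $n$ variables without constant term, a subset $S$ of a commutative algebra is a set of free generators (SFG) if $P(x_1,\dots,x_n)\ne0$ for every $n$, every non-zero $P\in\mathbb{P}_n$ and all pairwise distinct $x_1,\dots,x_n\in S$. A commutative free algebra is one of the form $X=\langle A\rangle$ with $A$ an SFG; it is $\alpha$-generated free when such $A$ has cardinality $\alpha$. *)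

theory Defs
  imports "HOL-Analysis.Analysis" "HOL-Library.Equipollence"
begin

text \<open>An (associative, commutative, not necessarily unital) algebra over the scalar field 'k
  is modelled as a type 'a of class comm_ring together with a scalar multiplication smul.\<close>

definition algebra_over :: "('k::field \<Rightarrow> 'a::comm_ring \<Rightarrow> 'a) \<Rightarrow> bool" where
  "algebra_over smul \<longleftrightarrow>
     (\<forall>a x y. smul a (x + y) = smul a x + smul a y) \<and>
     (\<forall>a b x. smul (a + b) x = smul a x + smul b x) \<and>
     (\<forall>a b x. smul (a * b) x = smul a (smul b x)) \<and>
     (\<forall>x. smul 1 x = x) \<and>
     (\<forall>a x y. smul a (x * y) = smul a x * y \<and> smul a (x * y) = x * smul a y)"

definition topological_algebra ::
  "('k::{field,topological_space} \<Rightarrow> 'a::{comm_ring,topological_space} \<Rightarrow> 'a) \<Rightarrow> bool" where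
  "topological_algebra smul \<longleftrightarrow>
     algebra_over smul \<and>
     continuous_on UNIV (\<lambda>p::'a \<times> 'a. fst p + snd p) \<and>
     continuous_on UNIV (\<lambda>p::'a \<times> 'a. fst p * snd p) \<and>
     continuous_on UNIV (\<lambda>p::'k \<times> 'a. smul (fst p) (snd p))"

inductive_set gen :: "('k \<Rightarrow> 'a::comm_ring \<Rightarrow> 'a) \<Rightarrow> 'a set \<Rightarrow> 'a set"
  for smul :: "'k \<Rightarrow> 'a \<Rightarrow> 'a" and S :: "'a set" where
  gen_base: "x \<in> S \<Longrightarrow> x \<in> gen smul S"
| gen_zero: "0 \<in> gen smul S"
| gen_add: "x \<in> gen smul S \<Longrightarrow> y \<in> gen smul S \<Longrightarrow> x + y \<in> gen smul S"
| gen_mult: "x \<in> gen smul S \<Longrightarrow> y \<in> gen smul S \<Longrightarrow> x * y \<in> gen smul S"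
| gen_smul: "x \<in> gen smul S \<Longrightarrow> smul a x \<in> gen smul S"

text \<open>Polynomials in n variables without constant term, with coefficients in 'k:
  coefficient functions on exponent vectors m (m i = exponent of variable i, i < n),
  finitely supported, supported on non-constant monomials.\<close>
definition poly_nc :: "nat \<Rightarrow> ((nat \<Rightarrow> nat) \<Rightarrow> 'k::zero) \<Rightarrow> bool" where
  "poly_nc n c \<longleftrightarrow> finite {m. c m \<noteq> 0} \<and>
     (\<forall>m. c m \<noteq> 0 \<longrightarrow> m \<noteq> (\<lambda>_. 0) \<and> (\<forall>i\<ge>n. m i = 0))"

text \<open>Product of a nonempty list in a (possibly non-unital) commutative ring.\<close>
fun prodl :: "'a::comm_ring list \<Rightarrow> 'a" where
  "prodl [] = 0"
| "prodl [x] = x"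
| "prodl (x # xs) = x * prodl xs"

definition mon_eval :: "nat \<Rightarrow> (nat \<Rightarrow> nat) \<Rightarrow> (nat \<Rightarrow> 'a::comm_ring) \<Rightarrow> 'a" where
  "mon_eval n m x = prodl (concat (map (\<lambda>i. replicate (m i) (x i)) [0..<n]))"

definition poly_eval :: "('k::zero \<Rightarrow> 'a::comm_ring \<Rightarrow> 'a) \<Rightarrow> nat \<Rightarrow> ((nat \<Rightarrow> nat) \<Rightarrow> 'k)
    \<Rightarrow> (nat \<Rightarrow> 'a) \<Rightarrow> 'a" where
  "poly_eval smul n c x = (\<Sum>m\<in>{m. c m \<noteq> 0}. smul (c m) (mon_eval n m x))"

definition SFG :: "('k::zero \<Rightarrow> 'a::comm_ring \<Rightarrow> 'a) \<Rightarrow> 'a set \<Rightarrow> bool" where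
  "SFG smul S \<longleftrightarrow>
     (\<forall>n c x. poly_nc n c \<and> c \<noteq> (\<lambda>_. 0) \<and> inj_on x {..<n} \<and> x ` {..<n} \<subseteq> S
        \<longrightarrow> poly_eval smul n c x \<noteq> 0)"

definition weight_le :: "'a::topological_space itself \<Rightarrow> 'b set \<Rightarrow> bool" where
  "weight_le _ A \<longleftrightarrow> (\<exists>B::'a set set. topological_basis B \<and> B \<lesssim> A)"

end

theory Submission
  imports Defs
begin



locale alg =
  fixes smul :: "'k::field \<Rightarrow> 'a::comm_ring \<Rightarrow> 'a"
  assumes ao: "algebra_over smul"
begin

lemma sm_add: "smul a (x + y) = smul a x + smul a y" using ao unfolding algebra_over_def by blast
lemma add_sm: "smul (a + b) x = smul a x + smul b x" using ao unfolding algebra_over_def by blast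
lemma sm_sm: "smul (a * b) x = smul a (smul b x)" using ao unfolding algebra_over_def by blast
lemma sm_one: "smul 1 x = x" using ao unfolding algebra_over_def by blast
lemma sm_m1: "smul a (x * y) = smul a x * y" using ao unfolding algebra_over_def by blast
lemma sm_m2: "smul a (x * y) = x * smul a y" using ao unfolding algebra_over_def by blast
lemma sm_0k: "smul 0 x = 0"
proof -
  have "smul 0 x = smul 0 x + smul 0 x" using add_sm[of 0 0 x] by simp
  then show ?thesis by simp
qed
lemma sm_0: "smul a 0 = 0"
proof -
  have "smul a 0 = smul a 0 + smul a 0" using sm_add[of a 0 0] by simp
  then show ?thesis by simp
qed
lemma sm_neg1: "smul (-1) x = - x"
proof -
  have "smul (-1) x + smul 1 x = 0" using add_sm[of "-1" 1 x] sm_0k by simp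
  then show ?thesis using sm_one by (simp add: add_eq_0_iff2)
qed
lemma sm_sum: "smul a (sum f M) = (\<Sum>m\<in>M. smul a (f m))"
  by (induction M rule: infinite_finite_induct) (auto simp: sm_0 sm_add)
lemma sum_sm: "smul (sum f M) x = (\<Sum>m\<in>M. smul (f m) x)"
  by (induction M rule: infinite_finite_induct) (auto simp: sm_0k add_sm)
lemma sm_mm: "smul a x * smul b y = smul (a * b) (x * y)"
  by (metis sm_m1 sm_m2 sm_sm)
lemma sm_inv: "e \<noteq> 0 \<Longrightarrow> smul e (smul (inverse e) x) = x"
  by (simp add: sm_sm[symmetric] sm_one)

end




definition OP :: "'a::comm_ring list \<Rightarrow> 'a option" where
  "OP xs = (if xs = [] then None else Some (prodl xs))"

fun omul :: "'a::comm_ring option \<Rightarrow> 'a option \<Rightarrow> 'a option" where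
  "omul None b = b"
| "omul a None = a"
| "omul (Some a) (Some b) = Some (a * b)"

lemma omul_None2[simp]: "omul a None = a" by (cases a) auto
lemma omul_assoc: "omul (omul a b) c = omul a (omul b c)"
  by (cases a; cases b; cases c) (auto simp: mult.assoc)
lemma omul_comm: "omul a b = omul b a"
  by (cases a; cases b) (auto simp: mult.commute)
lemma omul_swap: "omul (omul a b) (omul c d) = omul (omul a c) (omul b d)"
  by (metis omul_assoc omul_comm)

lemma prodl_Cons2: "xs \<noteq> [] \<Longrightarrow> prodl (x # xs) = x * prodl xs"
  by (cases xs) auto

lemma OP_append: "OP (xs @ ys) = omul (OP xs) (OP ys)"
proof (induction xs)
  case Nil then show ?case by (simp add: OP_def)
next
  case (Cons x xs)
  show ?case
  proof (cases "xs = []")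
    case True then show ?thesis by (cases ys) (auto simp: OP_def)
  next
    case False
    then have "OP (xs @ ys) = omul (Some (prodl xs)) (OP ys)" using Cons by (simp add: OP_def)
    then show ?thesis using False
      by (cases "ys = []") (auto simp: OP_def prodl_Cons2 mult.assoc split: if_splits)
  qed
qed

definition mlist :: "nat \<Rightarrow> (nat \<Rightarrow> nat) \<Rightarrow> (nat \<Rightarrow> 'a) \<Rightarrow> 'a list" where
  "mlist n m x = concat (map (\<lambda>i. replicate (m i) (x i)) [0..<n])"

lemma mlist_Suc: "mlist (Suc n) m x = mlist n m x @ replicate (m n) (x n)"
  by (simp add: mlist_def)

lemma mon_eval_mlist: "mon_eval n m x = prodl (mlist n m x)"
  by (simp add: mon_eval_def mlist_def)

lemma OP_rep_add: "OP (replicate (k1 + k2) v) = omul (OP (replicate k1 v)) (OP (replicate k2 v))"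
  by (simp add: replicate_add OP_append)

lemma OP_mlist_add: "OP (mlist n (\<lambda>i. m1 i + m2 i) x) = omul (OP (mlist n m1 x)) (OP (mlist n m2 x))"
proof (induction n)
  case 0 then show ?case by (simp add: mlist_def OP_def)
next
  case (Suc n)
  show ?case unfolding mlist_Suc OP_append Suc OP_rep_add by (rule omul_swap)
qed

lemma mlist_ne: "i < n \<Longrightarrow> m i \<noteq> 0 \<Longrightarrow> mlist n m x \<noteq> []"
proof (induction n)
  case 0 then show ?case by simp
next
  case (Suc n) then show ?case by (cases "i = n") (auto simp: mlist_Suc)
qed

definition dl :: "nat \<Rightarrow> nat \<Rightarrow> nat" where "dl i = (\<lambda>l. if l = i then 1 else 0)"

lemma OP_mlist_dl: "OP (mlist n (dl i) x) = (if i < n then Some (x i) else None)"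
proof (induction n)
  case 0 then show ?case by (simp add: mlist_def OP_def)
next
  case (Suc n) then show ?case by (auto simp: mlist_Suc OP_append dl_def OP_def split: if_splits)
qed

lemma mon_eval_dl: "i < n \<Longrightarrow> mon_eval n (dl i) x = x i"
  using OP_mlist_dl[of n i x] by (auto simp: mon_eval_mlist OP_def split: if_splits)

lemma mon_eval_add:
  assumes "i < n" "m1 i \<noteq> 0" "j < n" "m2 j \<noteq> 0"
  shows "mon_eval n (\<lambda>l. m1 l + m2 l) x = mon_eval n m1 x * mon_eval n m2 x"
proof -
  have a: "mlist n m1 x \<noteq> []" "mlist n m2 x \<noteq> []" using mlist_ne assms by auto
  have b: "mlist n (\<lambda>l. m1 l + m2 l) x \<noteq> []" using mlist_ne[of i n "\<lambda>l. m1 l + m2 l"] assms by auto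
  show ?thesis using OP_mlist_add[of n m1 m2 x] a b by (simp add: OP_def mon_eval_mlist)
qed

lemma mon_eval_cong: "(\<And>i. i < n \<Longrightarrow> x i = y i) \<Longrightarrow> mon_eval n m x = mon_eval n m y"
  unfolding mon_eval_def by (rule arg_cong[where f=prodl]) (auto intro!: arg_cong[where f=concat])

lemma poly_eval_cong: "(\<And>i. i < n \<Longrightarrow> x i = y i) \<Longrightarrow> poly_eval smul n c x = poly_eval smul n c y"
  unfolding poly_eval_def using mon_eval_cong by metis




datatype ('k, 'v) tm = TV 'v | TZ | TA "('k, 'v) tm" "('k, 'v) tm" | TM "('k, 'v) tm" "('k, 'v) tm"
  | TS 'k "('k, 'v) tm"

fun ev :: "('k \<Rightarrow> 'a::comm_ring \<Rightarrow> 'a) \<Rightarrow> ('v \<Rightarrow> 'a) \<Rightarrow> ('k, 'v) tm \<Rightarrow> 'a" where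
  "ev s x (TV v) = x v"
| "ev s x TZ = 0"
| "ev s x (TA a b) = ev s x a + ev s x b"
| "ev s x (TM a b) = ev s x a * ev s x b"
| "ev s x (TS k a) = s k (ev s x a)"

fun vars :: "('k, 'v) tm \<Rightarrow> 'v set" where
  "vars (TV v) = {v}"
| "vars TZ = {}"
| "vars (TA a b) = vars a \<union> vars b"
| "vars (TM a b) = vars a \<union> vars b"
| "vars (TS k a) = vars a"

fun sbs :: "('v \<Rightarrow> ('k, 'w) tm) \<Rightarrow> ('k, 'v) tm \<Rightarrow> ('k, 'w) tm" where
  "sbs f (TV v) = f v"
| "sbs f TZ = TZ"
| "sbs f (TA a b) = TA (sbs f a) (sbs f b)"
| "sbs f (TM a b) = TM (sbs f a) (sbs f b)"
| "sbs f (TS k a) = TS k (sbs f a)"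

lemma finite_vars: "finite (vars e)" by (induction e) auto

lemma ev_cong: "(\<And>v. v \<in> vars e \<Longrightarrow> x v = y v) \<Longrightarrow> ev s x e = ev s y e"
  by (induction e) auto

lemma ev_sbs: "ev s x (sbs f e) = ev s (\<lambda>v. ev s x (f v)) e"
  by (induction e) auto

lemma vars_sbs: "vars (sbs f e) = (\<Union>v\<in>vars e. vars (f v))"
  by (induction e) auto

lemma ev_gen: "vars e \<subseteq> S \<Longrightarrow> ev s (\<lambda>u. u) e \<in> gen s S"
  by (induction e) (auto intro: gen.intros)

lemma gen_rep: "v \<in> gen s S \<Longrightarrow> \<exists>e. vars e \<subseteq> S \<and> ev s (\<lambda>u. u) e = v"
proof (induction rule: gen.induct)
  case (gen_base x) then show ?case by (intro exI[of _ "TV x"]) auto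
next
  case gen_zero then show ?case by (intro exI[of _ TZ]) auto
next
  case (gen_add x y)
  then obtain e1 e2 where "vars e1 \<subseteq> S" "ev s (\<lambda>u. u) e1 = x" "vars e2 \<subseteq> S" "ev s (\<lambda>u. u) e2 = y" by blast
  then show ?case by (intro exI[of _ "TA e1 e2"]) auto
next
  case (gen_mult x y)
  then obtain e1 e2 where "vars e1 \<subseteq> S" "ev s (\<lambda>u. u) e1 = x" "vars e2 \<subseteq> S" "ev s (\<lambda>u. u) e2 = y" by blast
  then show ?case by (intro exI[of _ "TM e1 e2"]) auto
next
  case (gen_smul x a)
  then obtain e1 where "vars e1 \<subseteq> S" "ev s (\<lambda>u. u) e1 = x" by blast
  then show ?case by (intro exI[of _ "TS a e1"]) auto
qed

lemma gen_mono: assumes "S \<subseteq> T" shows "gen s S \<subseteq> gen s T"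
proof
  fix v assume "v \<in> gen s S"
  then show "v \<in> gen s T" by (induction rule: gen.induct) (use assms in \<open>auto intro: gen.intros\<close>)
qed

definition madd :: "(nat \<Rightarrow> nat) \<times> (nat \<Rightarrow> nat) \<Rightarrow> nat \<Rightarrow> nat" where
  "madd p = (\<lambda>l. fst p l + snd p l)"

definition pmul :: "((nat \<Rightarrow> nat) \<Rightarrow> 'k::field) \<Rightarrow> ((nat \<Rightarrow> nat) \<Rightarrow> 'k) \<Rightarrow> (nat \<Rightarrow> nat) \<Rightarrow> 'k" where
  "pmul c d m = (\<Sum>p\<in>{p \<in> {m. c m \<noteq> 0} \<times> {m. d m \<noteq> 0}. madd p = m}. c (fst p) * d (snd p))"

fun nf :: "('k::field, nat) tm \<Rightarrow> (nat \<Rightarrow> nat) \<Rightarrow> 'k" where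
  "nf (TV i) = (\<lambda>m. if m = dl i then 1 else 0)"
| "nf TZ = (\<lambda>m. 0)"
| "nf (TA a b) = (\<lambda>m. nf a m + nf b m)"
| "nf (TM a b) = pmul (nf a) (nf b)"
| "nf (TS k a) = (\<lambda>m. k * nf a m)"

lemma pmul_supp: "{m. pmul c d m \<noteq> 0} \<subseteq> madd ` ({m. c m \<noteq> 0} \<times> {m. d m \<noteq> 0})"
proof
  fix m assume "m \<in> {m. pmul c d m \<noteq> 0}"
  then have "{p \<in> {m. c m \<noteq> 0} \<times> {m. d m \<noteq> 0}. madd p = m} \<noteq> {}"
  proof (intro notI)
    assume "{p \<in> {m. c m \<noteq> 0} \<times> {m. d m \<noteq> 0}. madd p = m} = {}"
    then have "pmul c d m = 0" unfolding pmul_def by (simp only: sum.empty)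
    then show False using \<open>m \<in> {m. pmul c d m \<noteq> 0}\<close> by simp
  qed
  then show "m \<in> madd ` ({m. c m \<noteq> 0} \<times> {m. d m \<noteq> 0})" by blast
qed

lemma nc_ex: "poly_nc n c \<Longrightarrow> c m \<noteq> 0 \<Longrightarrow> \<exists>i<n. m i \<noteq> 0"
proof (rule ccontr)
  assume a: "poly_nc n c" "c m \<noteq> 0" "\<not> (\<exists>i<n. m i \<noteq> 0)"
  then have "\<forall>i. m i = 0" unfolding poly_nc_def by (meson not_le)
  then have "m = (\<lambda>_. 0)" by auto
  then show False using a unfolding poly_nc_def by blast
qed

lemma nf_poly: "vars e \<subseteq> {..<n} \<Longrightarrow> poly_nc n (nf e)"
proof (induction e)
  case (TV i)
  then have "{m. nf (TV i) m \<noteq> (0::'a)} = {dl i}" by auto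
  moreover have "dl i \<noteq> (\<lambda>_. 0)" by (metis dl_def zero_neq_one)
  ultimately show ?case using TV by (auto simp: poly_nc_def dl_def)
next
  case TZ then show ?case by (simp add: poly_nc_def)
next
  case (TA a b)
  then have pa: "poly_nc n (nf a)" and pb: "poly_nc n (nf b)" by auto
  have "{m. nf (TA a b) m \<noteq> 0} \<subseteq> {m. nf a m \<noteq> 0} \<union> {m. nf b m \<noteq> 0}" by auto
  then show ?case using pa pb unfolding poly_nc_def
    by (auto intro: finite_subset)
next
  case (TM a b)
  then have pa: "poly_nc n (nf a)" and pb: "poly_nc n (nf b)" by auto
  have fin: "finite (madd ` ({m. nf a m \<noteq> 0} \<times> {m. nf b m \<noteq> 0}))"
    using pa pb unfolding poly_nc_def by auto
  have F: "finite {m. nf (TM a b) m \<noteq> 0}" using finite_subset[OF pmul_supp fin] by simp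
  have "\<forall>m. nf (TM a b) m \<noteq> 0 \<longrightarrow> m \<noteq> (\<lambda>_. 0) \<and> (\<forall>i\<ge>n. m i = 0)"
  proof (intro allI impI)
    fix m assume "nf (TM a b) m \<noteq> 0"
    then obtain m1 m2 where m: "nf a m1 \<noteq> 0" "nf b m2 \<noteq> 0" "m = madd (m1, m2)"
      using pmul_supp[of "nf a" "nf b"] by auto
    obtain i where "i < n" "m1 i \<noteq> 0" using nc_ex[OF pa m(1)] by blast
    then have h1: "m \<noteq> (\<lambda>_. 0)" using m(3) by (auto simp: madd_def fun_eq_iff)
    have h2: "\<forall>i\<ge>n. m i = 0" using m pa pb unfolding poly_nc_def madd_def by auto
    show "m \<noteq> (\<lambda>_. 0) \<and> (\<forall>i\<ge>n. m i = 0)" using h1 h2 by blast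
  qed
  then show ?case using F unfolding poly_nc_def by blast
next
  case (TS k a)
  then have pa: "poly_nc n (nf a)" by auto
  have "{m. nf (TS k a) m \<noteq> 0} \<subseteq> {m. nf a m \<noteq> 0}" by auto
  then show ?case using pa unfolding poly_nc_def by (auto intro: finite_subset)
qed

context alg begin

lemma pe_superset: "finite M \<Longrightarrow> {m. c m \<noteq> 0} \<subseteq> M \<Longrightarrow>
    poly_eval smul n c x = (\<Sum>m\<in>M. smul (c m) (mon_eval n m x))"
  unfolding poly_eval_def by (rule sum.mono_neutral_left) (auto simp: sm_0k)

lemma nf_sound: "vars e \<subseteq> {..<n} \<Longrightarrow> ev smul x e = poly_eval smul n (nf e) x"
proof (induction e)
  case (TV i)
  then have "{m. nf (TV i) m \<noteq> (0::'k)} = {dl i}" by auto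
  then show ?case using TV by (simp add: poly_eval_def sm_one mon_eval_dl)
next
  case TZ then show ?case by (simp add: poly_eval_def)
next
  case (TA a b)
  then have pa: "poly_nc n (nf a)" and pb: "poly_nc n (nf b)" using nf_poly by auto
  let ?M = "{m. nf a m \<noteq> 0} \<union> {m. nf b m \<noteq> 0}"
  have fM: "finite ?M" using pa pb unfolding poly_nc_def by auto
  have "poly_eval smul n (nf (TA a b)) x = (\<Sum>m\<in>?M. smul (nf (TA a b) m) (mon_eval n m x))"
    by (rule pe_superset[OF fM]) auto
  also have "\<dots> = (\<Sum>m\<in>?M. smul (nf a m) (mon_eval n m x)) + (\<Sum>m\<in>?M. smul (nf b m) (mon_eval n m x))"
    by (simp add: add_sm sum.distrib)
  also have "\<dots> = poly_eval smul n (nf a) x + poly_eval smul n (nf b) x"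
    using pe_superset[OF fM] by auto
  finally show ?case using TA by simp
next
  case (TS k a)
  then have pa: "poly_nc n (nf a)" using nf_poly by auto
  let ?M = "{m. nf a m \<noteq> 0}"
  have fM: "finite ?M" using pa unfolding poly_nc_def by auto
  have "poly_eval smul n (nf (TS k a)) x = (\<Sum>m\<in>?M. smul (nf (TS k a) m) (mon_eval n m x))"
    by (rule pe_superset[OF fM]) auto
  also have "\<dots> = smul k (poly_eval smul n (nf a) x)"
    by (simp add: sm_sm sm_sum poly_eval_def)
  finally show ?case using TS by simp
next
  case (TM a b)
  then have pa: "poly_nc n (nf a)" and pb: "poly_nc n (nf b)" using nf_poly by auto
  define c where "c = nf a"
  define d where "d = nf b"
  define S1 where "S1 = {m. c m \<noteq> 0}"
  define S2 where "S2 = {m. d m \<noteq> 0}"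
  define mon where "mon m = mon_eval n m x" for m
  have f1: "finite S1" and f2: "finite S2" using pa pb unfolding poly_nc_def S1_def S2_def c_def d_def by auto
  have fP: "finite (S1 \<times> S2)" using f1 f2 by auto
  have "ev smul x (TM a b) = (\<Sum>m1\<in>S1. smul (c m1) (mon m1)) * (\<Sum>m2\<in>S2. smul (d m2) (mon m2))"
    using TM by (simp add: poly_eval_def S1_def S2_def c_def d_def mon_def)
  also have "\<dots> = (\<Sum>m1\<in>S1. \<Sum>m2\<in>S2. smul (c m1) (mon m1) * smul (d m2) (mon m2))"
    by (rule sum_product)
  also have "\<dots> = (\<Sum>p\<in>S1 \<times> S2. smul (c (fst p)) (mon (fst p)) * smul (d (snd p)) (mon (snd p)))"
    by (simp add: sum.cartesian_product case_prod_beta)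
  also have "\<dots> = (\<Sum>p\<in>S1 \<times> S2. smul (c (fst p) * d (snd p)) (mon (madd p)))"
  proof (rule sum.cong[OF refl])
    fix p assume p: "p \<in> S1 \<times> S2"
    have "nf a (fst p) \<noteq> 0" "nf b (snd p) \<noteq> 0" using p unfolding S1_def S2_def c_def d_def by auto
    then obtain i j where i: "i < n" "fst p i \<noteq> 0" and j: "j < n" "snd p j \<noteq> 0"
      using nc_ex[OF pa] nc_ex[OF pb] by blast
    show "smul (c (fst p)) (mon (fst p)) * smul (d (snd p)) (mon (snd p)) =
          smul (c (fst p) * d (snd p)) (mon (madd p))"
      unfolding sm_mm mon_def madd_def using mon_eval_add[of i n "fst p" j "snd p" x, OF i j] by simp
  qed
  also have "\<dots> = (\<Sum>m\<in>madd ` (S1 \<times> S2). \<Sum>p\<in>{p. p \<in> S1 \<times> S2 \<and> madd p = m}. smul (c (fst p) * d (snd p)) (mon (madd p)))"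
    by (rule sum.image_gen[OF fP])
  also have "\<dots> = (\<Sum>m\<in>madd ` (S1 \<times> S2). smul (pmul c d m) (mon m))"
    unfolding pmul_def sum_sm S1_def S2_def
    by (intro sum.cong[OF refl]) (auto intro!: sum.cong)
  also have "\<dots> = poly_eval smul n (pmul c d) x"
    unfolding mon_def
    by (rule pe_superset[symmetric]) (use fP pmul_supp[of c d] in \<open>auto simp: S1_def S2_def\<close>)
  finally show ?case by (simp add: c_def d_def)
qed

lemma sfg_zero_nat:
  fixes N :: nat and w :: "nat \<Rightarrow> 'a" and e :: "('k, nat) tm"
  assumes "SFG smul S" "inj_on w {..<N}" "w ` {..<N} \<subseteq> S" "vars e \<subseteq> {..<N}" "ev smul w e = 0"
  shows "ev smul y e = 0"
proof -
  have pn: "poly_nc N (nf e)" using nf_poly assms(4) by blast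
  have "poly_eval smul N (nf e) w = 0" using nf_sound assms(4,5) by metis
  then have "nf e = (\<lambda>_. 0)" using assms(1-3) pn unfolding SFG_def by blast
  then show ?thesis using nf_sound[OF assms(4)] by (simp add: poly_eval_def)
qed

end



fun tprodl :: "('k, 'v) tm list \<Rightarrow> ('k, 'v) tm" where
  "tprodl [] = TZ"
| "tprodl [t] = t"
| "tprodl (t # ts) = TM t (tprodl ts)"

lemma ev_tprodl: "ev s x (tprodl ts) = prodl (map (ev s x) ts)"
  by (induction ts rule: tprodl.induct) auto

lemma vars_tprodl: "vars (tprodl ts) \<subseteq> (\<Union>t\<in>set ts. vars t)"
  by (induction ts rule: tprodl.induct) auto

fun tsuml :: "('k, 'v) tm list \<Rightarrow> ('k, 'v) tm" where
  "tsuml [] = TZ"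
| "tsuml (t # ts) = TA t (tsuml ts)"

lemma ev_tsuml: "ev s x (tsuml ts) = sum_list (map (ev s x) ts)"
  by (induction ts) auto

lemma vars_tsuml: "vars (tsuml ts) = (\<Union>t\<in>set ts. vars t)"
  by (induction ts) auto

definition tmon :: "nat \<Rightarrow> (nat \<Rightarrow> nat) \<Rightarrow> ('k, nat) tm" where
  "tmon n m = tprodl (concat (map (\<lambda>i. replicate (m i) (TV i)) [0..<n]))"

lemma ev_tmon: "ev s x (tmon n m) = mon_eval n m x"
  unfolding tmon_def ev_tprodl mon_eval_def by (simp add: map_concat comp_def)

lemma vars_tmon: "vars (tmon n m) \<subseteq> {..<n}"
  unfolding tmon_def using vars_tprodl by fastforce

definition tpoly :: "nat \<Rightarrow> ((nat \<Rightarrow> nat) \<Rightarrow> 'k::zero) \<Rightarrow> ('k, nat) tm" where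
  "tpoly n c = tsuml (map (\<lambda>m. TS (c m) (tmon n m))
      (SOME L. set L = {m. c m \<noteq> 0} \<and> distinct L))"

lemma vars_tpoly: "vars (tpoly n c) \<subseteq> {..<n}"
  unfolding tpoly_def vars_tsuml using vars_tmon by fastforce

lemma ev_tpoly:
  assumes "poly_nc n c"
  shows "ev s x (tpoly n c) = poly_eval s n c x"
proof -
  obtain L where L: "set L = {m. c m \<noteq> 0} \<and> distinct L"
    using finite_distinct_list assms unfolding poly_nc_def by blast
  define L' where "L' = (SOME L. set L = {m. c m \<noteq> 0} \<and> distinct L)"
  have L': "set L' = {m. c m \<noteq> 0} \<and> distinct L'" unfolding L'_def by (rule someI[of _ L]) (rule L)
  have "ev s x (tpoly n c) = sum_list (map (\<lambda>m. s (c m) (mon_eval n m x)) L')"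
    unfolding tpoly_def L'_def[symmetric] ev_tsuml by (simp add: comp_def ev_tmon)
  also have "\<dots> = (\<Sum>m\<in>set L'. s (c m) (mon_eval n m x))"
    using L' by (simp add: sum_list_distinct_conv_sum_set)
  finally show ?thesis using L' by (simp add: poly_eval_def)
qed

lemma sfg_subset: "SFG s S \<Longrightarrow> T \<subseteq> S \<Longrightarrow> SFG s T"
  unfolding SFG_def by blast

context alg begin

lemma ev_zero: "(\<And>v. v \<in> vars e \<Longrightarrow> x v = 0) \<Longrightarrow> ev smul x e = 0"
  by (induction e) (auto simp: sm_0)

lemma sfg_zero:
  assumes S: "SFG smul S" and V: "vars e \<subseteq> S" and E: "ev smul (\<lambda>u. u) e = 0"
  shows "ev smul y e = 0"
proof -
  define W where "W = vars e"
  have fW: "finite W" unfolding W_def by (rule finite_vars)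
  obtain h where h: "bij_betw h {0..<card W} W" using ex_bij_betw_nat_finite[OF fW] by blast
  define N where "N = card W"
  define g where "g = inv_into {0..<N} h"
  have g1: "v \<in> W \<Longrightarrow> g v < N" for v
    using h inv_into_into[of v h "{0..<N}"] unfolding g_def N_def bij_betw_def by auto
  have g2: "v \<in> W \<Longrightarrow> h (g v) = v" for v
    using h f_inv_into_f[of v h "{0..<N}"] unfolding g_def N_def bij_betw_def by auto
  define e' where "e' = sbs (\<lambda>v. TV (g v)) e"
  have ev': "ev smul x e' = ev smul (\<lambda>v. x (g v)) e" for x
    unfolding e'_def ev_sbs by simp
  have ve: "vars e' \<subseteq> {..<N}" unfolding e'_def vars_sbs using g1 W_def by auto
  have hi: "inj_on h {..<N}" using h unfolding bij_betw_def N_def by (simp add: atLeast0LessThan)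
  have hs: "h ` {..<N} \<subseteq> S" using h V unfolding bij_betw_def N_def W_def by (simp add: atLeast0LessThan)
  have "ev smul h e' = ev smul (\<lambda>u. u) e" unfolding ev' by (rule ev_cong) (simp add: g2 W_def)
  then have "ev smul h e' = 0" using E by simp
  then have "ev smul (\<lambda>i. y (h i)) e' = 0" by (rule sfg_zero_nat[OF S hi hs ve])
  moreover have "ev smul (\<lambda>i. y (h i)) e' = ev smul y e" unfolding ev' by (rule ev_cong) (simp add: g2 W_def)
  ultimately show ?thesis by simp
qed

lemma sfg_nonzero: assumes "SFG smul S" "a \<in> S" shows "a \<noteq> 0"
proof
  assume a0: "a = 0"
  have v: "vars (TV 0 :: ('k, nat) tm) \<subseteq> {..<1}" by simp
  have "poly_eval smul 1 (nf (TV 0 :: ('k, nat) tm)) (\<lambda>_. a) = ev smul (\<lambda>_. a) (TV 0 :: ('k, nat) tm)"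
    using nf_sound[OF v] by metis
  then have "poly_eval smul 1 (nf (TV 0 :: ('k, nat) tm)) (\<lambda>_. a) = 0" using a0 by simp
  moreover have "poly_nc 1 (nf (TV 0 :: ('k, nat) tm))" using nf_poly[OF v] .
  moreover have "nf (TV 0 :: ('k, nat) tm) \<noteq> (\<lambda>_. 0)"
    by (metis (full_types) nf.simps(1) zero_neq_one)
  moreover have "inj_on (\<lambda>_. a) {..<1::nat}" by (simp add: inj_on_def)
  ultimately show False using assms unfolding SFG_def by blast
qed

lemma gen_disj:
  assumes S: "SFG smul S" and "S1 \<subseteq> S" "S2 \<subseteq> S" "S1 \<inter> S2 = {}"
    and v1: "v \<in> gen smul S1" and v2: "v \<in> gen smul S2"
  shows "v = 0"
proof -
  obtain e1 where e1: "vars e1 \<subseteq> S1" "ev smul (\<lambda>u. u) e1 = v" using gen_rep[OF v1] by blast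
  obtain e2 where e2: "vars e2 \<subseteq> S2" "ev smul (\<lambda>u. u) e2 = v" using gen_rep[OF v2] by blast
  define E where "E = TA e1 (TS (-1) e2)"
  have "vars E \<subseteq> S" using e1 e2 assms unfolding E_def by auto
  moreover have "ev smul (\<lambda>u. u) E = 0" unfolding E_def using e1 e2 by (simp add: sm_neg1)
  ultimately have Z: "ev smul (\<lambda>u. if u \<in> S1 then u else 0) E = 0" using sfg_zero[OF S] by blast
  have "ev smul (\<lambda>u. if u \<in> S1 then u else 0) e1 = ev smul (\<lambda>u. u) e1"
    by (rule ev_cong) (use e1 in auto)
  moreover have "ev smul (\<lambda>u. if u \<in> S1 then u else 0) e2 = 0"
    by (rule ev_zero) (use e2 assms in auto)
  ultimately show ?thesis using Z e1 unfolding E_def by (simp add: sm_0)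
qed

lemma not_gen_minus:
  assumes S: "SFG smul S" and a: "a \<in> S"
  shows "a \<notin> gen smul (S - {a})"
proof
  assume "a \<in> gen smul (S - {a})"
  moreover have "a \<in> gen smul {a}" by (rule gen_base) simp
  ultimately have "a = 0" using gen_disj[OF S, of "{a}" "S - {a}"] a by auto
  then show False using sfg_nonzero[OF S a] by simp
qed

lemma exchange:
  assumes S: "SFG smul (insert a T)" and aT: "a \<notin> T" and q: "q \<in> gen smul T" and e: "e \<noteq> 0"
  shows "SFG smul (insert (smul e a + q) T)"
  unfolding SFG_def
proof (intro allI impI notI)
  define f where "f = smul e a + q"
  fix n c x
  assume H: "poly_nc n c \<and> c \<noteq> (\<lambda>_. 0) \<and> inj_on x {..<n} \<and> x ` {..<n} \<subseteq> insert (smul e a + q) T"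
    and PE: "poly_eval smul n c x = 0"
  then have pn: "poly_nc n c" and c0: "c \<noteq> (\<lambda>_. 0)" and xi: "inj_on x {..<n}"
    and xs: "x ` {..<n} \<subseteq> insert f T" unfolding f_def by auto
  show False
  proof (cases "f \<in> x ` {..<n}")
    case False
    then have "x ` {..<n} \<subseteq> insert a T" using xs by auto
    then show False using S pn c0 xi PE unfolding SFG_def by blast
  next
    case True
    then obtain j where j: "j < n" "x j = f" by auto
    have xT: "i < n \<Longrightarrow> i \<noteq> j \<Longrightarrow> x i \<in> T" for i
      using xs xi j inj_onD[OF xi, of i j] by auto
    obtain Q where Q: "vars Q \<subseteq> T" "ev smul (\<lambda>u. u) Q = q" using gen_rep[OF q] by blast
    define \<sigma> where "\<sigma> i = (if i = j then TA (TS e (TV a)) Q else TV (x i))" for i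
    define E where "E = sbs \<sigma> (tpoly n c)"
    have evE: "ev smul y E = poly_eval smul n c (\<lambda>i. ev smul y (\<sigma> i))" for y
      unfolding E_def ev_sbs by (rule ev_tpoly[OF pn])
    have "vars E \<subseteq> insert a T"
      unfolding E_def vars_sbs
    proof (intro UN_least)
      fix i assume "i \<in> vars (tpoly n c)"
      then have "i < n" using vars_tpoly by blast
      then show "vars (\<sigma> i) \<subseteq> insert a T" using Q xT unfolding \<sigma>_def by auto
    qed
    moreover have "ev smul (\<lambda>u. u) E = 0"
    proof -
      have "ev smul (\<lambda>u. u) E = poly_eval smul n c x"
        unfolding evE by (rule poly_eval_cong) (use j Q in \<open>auto simp: \<sigma>_def f_def\<close>)
      then show ?thesis using PE by simp
    qed
    ultimately have Z: "ev smul y E = 0" for y using sfg_zero[OF S] by blast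
    define y where "y u = (if u = a then smul (inverse e) (a - q) else u)" for u
    have yQ: "ev smul y Q = q" using Q aT by (metis ev_cong subsetD y_def)
    have "ev smul y E = poly_eval smul n c (x(j := a))"
      unfolding evE
    proof (rule poly_eval_cong)
      fix i assume i: "i < n"
      show "ev smul y (\<sigma> i) = (x(j := a)) i"
      proof (cases "i = j")
        case True
        then show ?thesis using yQ e by (simp add: \<sigma>_def y_def sm_inv)
      next
        case False
        then show ?thesis using xT[OF i False] aT by (auto simp: \<sigma>_def y_def)
      qed
    qed
    then have P0: "poly_eval smul n c (x(j := a)) = 0" using Z by simp
    have inj: "inj_on (x(j := a)) {..<n}"
      unfolding inj_on_def
    proof (intro ballI impI)
      fix i1 i2 assume i: "i1 \<in> {..<n}" "i2 \<in> {..<n}" "(x(j := a)) i1 = (x(j := a)) i2"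
      show "i1 = i2"
        using i xT[of i1] xT[of i2] aT inj_onD[OF xi, of i1 i2]
        by (auto split: if_splits)
    qed
    have "(x(j := a)) ` {..<n} \<subseteq> insert a T" using xT by auto
    then show False using S pn c0 inj P0 unfolding SFG_def by blast
  qed
qed

end



lemma eps_exists:
  fixes smul :: "'k::real_normed_field \<Rightarrow> 'a::{comm_ring,topological_space} \<Rightarrow> 'a"
  assumes TA: "topological_algebra smul" and U: "open U" "p \<in> U"
  shows "\<exists>t. t \<noteq> 0 \<and> smul t a + p \<in> U"
proof -
  interpret alg smul by (rule alg.intro) (use TA in \<open>simp add: topological_algebra_def\<close>)
  have cs: "continuous_on UNIV (\<lambda>q::'k \<times> 'a. smul (fst q) (snd q))"
    and ca: "continuous_on UNIV (\<lambda>q::'a \<times> 'a. fst q + snd q)"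
    using TA unfolding topological_algebra_def by auto
  have c1: "continuous_on UNIV (\<lambda>t::'k. smul t a)"
  proof -
    have "continuous_on UNIV (\<lambda>t::'k. (t, a))" by (intro continuous_intros)
    then show ?thesis using continuous_on_compose2[OF cs, of UNIV "\<lambda>t. (t, a)"] by simp
  qed
  have c2: "continuous_on UNIV (\<lambda>t::'k. smul t a + p)"
  proof -
    have "continuous_on UNIV (\<lambda>t::'k. (smul t a, p))" by (intro continuous_intros c1)
    then show ?thesis using continuous_on_compose2[OF ca, of UNIV "\<lambda>t. (smul t a, p)"] by simp
  qed
  define G where "G = (\<lambda>t::'k. smul t a + p) -` U"
  have oG: "open G" using continuous_on_open_vimage[OF open_UNIV] c2 U(1) unfolding G_def by auto
  have "0 \<in> G" unfolding G_def using U by (simp add: sm_0k)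
  moreover have "G \<noteq> {0}" using oG not_open_singleton by metis
  ultimately obtain t where "t \<in> G" "t \<noteq> 0" by blast
  then show ?thesis unfolding G_def by auto
qed

lemma dense_UNIV:
  assumes "\<And>V. open V \<Longrightarrow> V \<noteq> {} \<Longrightarrow> X \<inter> V \<noteq> {}"
  shows "closure X = UNIV"
proof -
  have "x \<in> closure X" for x
    unfolding closure_iff_nhds_not_empty
  proof (intro allI impI)
    fix A S assume "S \<subseteq> A" "open S" "x \<in> S"
    then show "X \<inter> A \<noteq> {}" using assms[of S] by blast
  qed
  then show ?thesis by blast
qed




unbundle cardinal_syntax

lemma main_thm:
  fixes smul :: "'k::real_normed_field \<Rightarrow> 'a::{comm_ring,topological_space} \<Rightarrow> 'a" and A :: "'a set"
  assumes TA: "topological_algebra smul" and SA: "SFG smul A" and GA: "gen smul A = UNIV"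
    and inf: "infinite A" and WA: "weight_le TYPE('a) A"
  shows "\<exists>F :: 'a \<Rightarrow> 'a set.
            (\<forall>k\<in>A. SFG smul (F k) \<and> F k \<approx> A \<and> closure (gen smul (F k)) = UNIV) \<and>
            (\<forall>k1\<in>A. \<forall>k2\<in>A. k1 \<noteq> k2 \<longrightarrow> F k1 \<inter> F k2 = {}) \<and>
            SFG smul (\<Union>k\<in>A. F k) \<and>
            (\<forall>k1\<in>A. \<forall>k2\<in>A. k1 \<noteq> k2 \<longrightarrow> gen smul (F k1) \<inter> gen smul (F k2) = {0})"
proof -
  interpret alg smul by (rule alg.intro) (use TA in \<open>simp add: topological_algebra_def\<close>)
  obtain B :: "'a set set" where B: "topological_basis B" "B \<lesssim> A"
    using WA unfolding weight_le_def by blast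
  obtain hB where hB: "inj_on hB B" "hB ` B \<subseteq> A" using B(2) unfolding lepoll_def by blast
  have "card_of (A \<times> A) =o card_of (A)"
    using card_of_Times_infinite[OF inf, of A] inf ordLeq_refl[OF card_of_Card_order] by auto
  then obtain \<phi> where \<phi>: "bij_betw \<phi> (A \<times> A) A" using card_of_ordIso by blast
  define \<psi> where "\<psi> = inv_into (A \<times> A) \<phi>"
  have \<psi>1: "i \<in> A \<Longrightarrow> \<psi> i \<in> A \<times> A \<and> \<phi> (\<psi> i) = i" for i
    using \<phi> unfolding \<psi>_def bij_betw_def by (auto intro: inv_into_into f_inv_into_f)
  have \<psi>2: "x \<in> A \<times> A \<Longrightarrow> \<psi> (\<phi> x) = x" for x
    using \<phi> unfolding \<psi>_def bij_betw_def by auto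
  define Ub where "Ub \<beta> = (if \<beta> \<in> hB ` B \<and> inv_into B hB \<beta> \<noteq> {} then inv_into B hB \<beta> else UNIV)" for \<beta>
  have Ub: "open (Ub \<beta>) \<and> Ub \<beta> \<noteq> {}" for \<beta>
    using topological_basis_open[OF B(1)] inv_into_into[of \<beta> hB B] unfolding Ub_def by auto
  define Ui where "Ui i = Ub (snd (\<psi> i))" for i
  define p where "p i = (SOME x. x \<in> Ui i)" for i
  have pU: "p i \<in> Ui i" for i unfolding p_def Ui_def using Ub some_in_eq by blast
  define s where "s i = (SOME s. finite s \<and> s \<subseteq> A \<and> p i \<in> gen smul s)" for i
  have s: "finite (s i) \<and> s i \<subseteq> A \<and> p i \<in> gen smul (s i)" for i
  proof -
    obtain e where e: "vars e \<subseteq> A" "ev smul (\<lambda>u. u) e = p i" using gen_rep[of "p i" smul A] GA by auto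
    have "finite (vars e) \<and> vars e \<subseteq> A \<and> p i \<in> gen smul (vars e)"
      using e finite_vars ev_gen[of e "vars e" smul] by auto
    then show ?thesis unfolding s_def by (rule someI)
  qed
  define r where "r = card_of (A)"
  have wo: "wo_rel r" unfolding r_def wo_rel_def by (rule card_of_Well_order)
  have Fr: "Field r = A" unfolding r_def by (rule Field_card_of)
  have tot: "i \<in> A \<Longrightarrow> j \<in> A \<Longrightarrow> (i, j) \<in> r \<or> (j, i) \<in> r" for i j
    using wo_rel.TOTALS[OF wo] Fr by auto
  have rA: "(i, j) \<in> r \<Longrightarrow> i \<in> A \<and> j \<in> A" for i j using Fr by (auto intro: FieldI1 FieldI2)
  define C where "C i = (\<Union>j\<in>{j. (j, i) \<in> r}. s j)" for i
  define blk where "blk i = \<phi> ` ({i} \<times> A)" for i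
  have blkA: "blk i \<subseteq> A" if "i \<in> A" for i using \<phi> that unfolding blk_def bij_betw_def by auto
  have blk_eq: "blk i \<approx> A" if "i \<in> A" for i
  proof -
    have "inj_on \<phi> ({i} \<times> A)" by (rule inj_on_subset[of \<phi> "A \<times> A"]) (use \<phi> that in \<open>auto simp: bij_betw_def\<close>)
    then have "blk i \<approx> {i} \<times> A" unfolding blk_def by (rule inj_on_image_eqpoll_self)
    then show ?thesis by (rule eqpoll_trans[OF _ times_singleton_eqpoll])
  qed
  have ex_a: "blk i - C i \<noteq> {}" if iA: "i \<in> A" for i
  proof
    assume sub0: "blk i - C i = {}"
    then have sub: "blk i \<subseteq> C i" by blast
    have bA: "card_of (blk i) =o card_of (A)" using blk_eq[OF iA] unfolding eqpoll_iff_card_of_ordIso .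
    have und: "{j. (j, i) \<in> r} = insert i (underS r i)"
      using tot[OF iA iA] unfolding underS_def by auto
    have "card_of (underS r i) <o r" by (rule card_of_underS) (simp_all add: r_def card_of_Card_order card_of_card_order_on Field_card_of iA)
    then have usm: "card_of (underS r i) <o card_of (A)" unfolding r_def .
    show False
    proof (cases "finite (underS r i)")
      case True
      then have "finite (insert i (underS r i))" by simp
      then have "finite (C i)" unfolding C_def und using s by blast
      then have "finite (blk i)" using sub finite_subset by blast
      then show False using blk_eq[OF iA] inf eqpoll_finite_iff by blast
    next
      case False
      have "card_of (insert i (underS r i)) =o card_of (underS r i)"
        using infinite_insert_eqpoll[OF False, of i] unfolding eqpoll_iff_card_of_ordIso .
      then have I1: "card_of (insert i (underS r i)) \<le>o card_of (underS r i)" unfolding ordIso_iff_ordLeq by blast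
      have I2: "\<forall>j\<in>insert i (underS r i). card_of (s j) \<le>o card_of (underS r i)"
      proof
        fix j assume "j \<in> insert i (underS r i)"
        have "s j \<lesssim> underS r i" using finite_lepoll_infinite[OF False] s by blast
        then show "card_of (s j) \<le>o card_of (underS r i)" unfolding lepoll_def card_of_ordLeq .
      qed
      have "card_of (C i) \<le>o card_of (underS r i)"
        unfolding C_def und by (rule card_of_UNION_ordLeq_infinite[OF False I1 I2])
      then have "card_of (C i) <o card_of (A)" using usm by (rule ordLeq_ordLess_trans)
      then have "card_of (blk i) <o card_of (A)" using card_of_mono1[OF sub] by (rule ordLeq_ordLess_trans[rotated])
      then show False using bA not_ordLess_ordIso by blast
    qed
  qed
  define a where "a i = (SOME x. x \<in> blk i - C i)" for i
  have a1: "a i \<in> blk i \<and> a i \<notin> C i" if "i \<in> A" for i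
    unfolding a_def using ex_a[OF that] some_in_eq by blast
  have aA: "a i \<in> A" if "i \<in> A" for i using a1[OF that] blkA[OF that] by blast
  have ainj: "inj_on a A"
  proof (rule inj_onI)
    fix i j assume ij: "i \<in> A" "j \<in> A" "a i = a j"
    obtain x where x: "x \<in> A" "a i = \<phi> (i, x)" using a1[OF ij(1)] unfolding blk_def by auto
    obtain y where y: "y \<in> A" "a j = \<phi> (j, y)" using a1[OF ij(2)] unfolding blk_def by auto
    have phi_inj: "inj_on \<phi> (A \<times> A)" using \<phi> unfolding bij_betw_def by blast
    have "\<phi> (i, x) = \<phi> (j, y)" using x y ij by simp
    then have "(i, x) = (j, y)" using inj_onD[OF phi_inj] x y ij by blast
    then show "i = j" by simp
  qed
  have as: "a i \<notin> s j" if "(j, i) \<in> r" for i j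
    using a1[of i] rA[OF that] that unfolding C_def by auto
  have ass: "a i \<notin> s i" if "i \<in> A" for i using as tot[OF that that] by blast
  define \<epsilon> where "\<epsilon> i = (SOME t. t \<noteq> 0 \<and> smul t (a i) + p i \<in> Ui i)" for i
  have \<epsilon>: "\<epsilon> i \<noteq> 0 \<and> smul (\<epsilon> i) (a i) + p i \<in> Ui i" for i
  proof -
    have "open (Ui i)" using Ub unfolding Ui_def by blast
    then obtain t where "t \<noteq> 0 \<and> smul t (a i) + p i \<in> Ui i"
      using eps_exists[OF TA _ pU[of i], of "a i"] by blast
    then show ?thesis unfolding \<epsilon>_def by (rule someI)
  qed
  define f where "f i = smul (\<epsilon> i) (a i) + p i" for i
  have F6: "f i \<noteq> w" if iA: "i \<in> A" and w: "w \<in> gen smul (A - {a i})" for i w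
  proof
    assume fw: "f i = w"
    have pg: "p i \<in> gen smul (A - {a i})"
      using s[of i] ass[OF iA] gen_mono[of "s i" "A - {a i}" smul] by auto
    have "w + smul (-1) (p i) \<in> gen smul (A - {a i})" using w pg by (intro gen_add gen_smul)
    then have g: "smul (inverse (\<epsilon> i)) (w + smul (-1) (p i)) \<in> gen smul (A - {a i})"
      by (rule gen_smul)
    have "w + smul (-1) (p i) = smul (\<epsilon> i) (a i)" using fw[symmetric] unfolding f_def by (simp add: sm_neg1)
    then have "smul (inverse (\<epsilon> i)) (w + smul (-1) (p i)) = a i"
      using \<epsilon>[of i] by (simp add: sm_sm[symmetric] sm_one)
    then show False using g not_gen_minus[OF SA aA[OF iA]] by simp
  qed
  have fgen: "f i \<in> gen smul (A - {a j})" if "i \<in> A" "j \<in> A" "i \<noteq> j" "(i, j) \<in> r" for i j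
  proof -
    have "a i \<noteq> a j" using inj_onD[OF ainj, of i j] that by auto
    then have "a i \<in> A - {a j}" using aA[OF that(1)] by blast
    then have 1: "a i \<in> gen smul (A - {a j})" by (rule gen_base)
    have "s i \<subseteq> A - {a j}" using s[of i] as[OF that(4)] by auto
    then have 2: "p i \<in> gen smul (A - {a j})" using s[of i] gen_mono[of "s i" "A - {a j}" smul] by blast
    show ?thesis unfolding f_def using 1 2 by (intro gen_add gen_smul)
  qed
  have finj: "inj_on f A"
  proof (rule inj_onI, rule ccontr)
    fix i j assume ij: "i \<in> A" "j \<in> A" "f i = f j" "i \<noteq> j"
    have ji: "j \<noteq> i" using ij(4) by simp
    show False
    proof (cases "(i, j) \<in> r")
      case True
      have "f j \<noteq> f i" by (rule F6[OF ij(2) fgen[OF ij(1,2,4) True]])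
      then show False using ij(3) by simp
    next
      case False
      then have "(j, i) \<in> r" using tot[OF ij(1,2)] by blast
      then have "f i \<noteq> f j" by (rule F6[OF ij(1) fgen[OF ij(2,1) ji]])
      then show False using ij(3) by simp
    qed
  qed
  have F8: "f j \<noteq> a i" if "i \<in> A" "j \<in> A" "i \<noteq> j" for i j
  proof -
    have "a i \<noteq> a j" using inj_onD[OF ainj, of i j] that by auto
    then have "a i \<in> A - {a j}" using aA[OF that(1)] by blast
    then have "a i \<in> gen smul (A - {a j})" by (rule gen_base)
    then show ?thesis by (rule F6[OF that(2)])
  qed
  have key: "\<forall>J. finite J \<and> J \<subseteq> A \<and> card J = n \<longrightarrow> SFG smul (f ` J \<union> (A - a ` J))" for n
  proof (induction n)
    case 0
    then show ?case using SA by auto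
  next
    case (Suc n)
    show ?case
    proof (intro allI impI)
      fix J assume J: "finite J \<and> J \<subseteq> A \<and> card J = Suc n"
      then have Jne: "J \<noteq> {}" by auto
      obtain m where m: "m \<in> J" "\<forall>y. (y, m) \<in> r - Id \<longrightarrow> y \<notin> J"
        using wfE_min'[OF wo_rel.WF[OF wo] Jne] by blast
      have mA: "m \<in> A" using m J by auto
      have mmin: "(m, j) \<in> r" if "j \<in> J" for j
        using m tot[OF mA, of j] that J by auto
      define J' where "J' = J - {m}"
      have J': "finite J' \<and> J' \<subseteq> A \<and> card J' = n" using J m unfolding J'_def by auto
      define S' where "S' = f ` J' \<union> (A - a ` J')"
      have SS': "SFG smul S'" using Suc J' unfolding S'_def by blast
      define T where "T = S' - {a m}"
      have amS: "a m \<in> S'" unfolding S'_def using aA[OF mA] inj_onD[OF ainj] J' mA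
        unfolding J'_def by auto
      then have ST: "insert (a m) T = S'" unfolding T_def by auto
      have sT: "s m \<subseteq> T"
      proof
        fix x assume x: "x \<in> s m"
        have "x \<in> A" using x s by auto
        moreover have "x \<noteq> a m" using x ass[OF mA] by auto
        moreover have "x \<notin> a ` J'"
        proof
          assume "x \<in> a ` J'"
          then obtain j where "j \<in> J'" "x = a j" by auto
          then show False using as[OF mmin[of j]] x unfolding J'_def by auto
        qed
        ultimately show "x \<in> T" unfolding T_def S'_def by auto
      qed
      have pT: "p m \<in> gen smul T" using s[of m] gen_mono[OF sT] by blast
      have "SFG smul (insert (f m) T)"
        unfolding f_def by (rule exchange) (use SS' ST pT \<epsilon> in \<open>auto simp: T_def\<close>)
      moreover have "f ` J \<union> (A - a ` J) \<subseteq> insert (f m) T"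
      proof
        fix x assume x: "x \<in> f ` J \<union> (A - a ` J)"
        show "x \<in> insert (f m) T"
        proof (cases "x \<in> f ` J")
          case True
          then obtain j where j: "j \<in> J" "x = f j" by auto
          show ?thesis
          proof (cases "j = m")
            case False
            then have "f j \<noteq> a m" using F8[OF mA, of j] j J by auto
            then show ?thesis using j False unfolding T_def S'_def J'_def by auto
          qed (use j in auto)
        next
          case False
          then show ?thesis using x m unfolding T_def S'_def J'_def by auto
        qed
      qed
      ultimately show "SFG smul (f ` J \<union> (A - a ` J))" by (rule sfg_subset)
    qed
  qed
  have SfA: "SFG smul (f ` A)"
    unfolding SFG_def
  proof (intro allI impI)
    fix n :: nat and c :: "(nat \<Rightarrow> nat) \<Rightarrow> 'k" and x :: "nat \<Rightarrow> 'a"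
    assume H: "poly_nc n c \<and> c \<noteq> (\<lambda>_. 0) \<and> inj_on x {..<n} \<and> x ` {..<n} \<subseteq> f ` A"
    define J where "J = (\<lambda>l. inv_into A f (x l)) ` {..<n}"
    have J: "finite J" "J \<subseteq> A" unfolding J_def using H by (auto intro!: inv_into_into)
    have "x ` {..<n} \<subseteq> f ` J" unfolding J_def using H by (force intro: f_inv_into_f[symmetric])
    then have "x ` {..<n} \<subseteq> f ` J \<union> (A - a ` J)" by blast
    then show "poly_eval smul n c x \<noteq> 0" using key[of "card J"] J H unfolding SFG_def by blast
  qed
  define F where "F \<kappa> = f ` {i \<in> A. fst (\<psi> i) = \<kappa>}" for \<kappa>
  have FfA: "F \<kappa> \<subseteq> f ` A" for \<kappa> unfolding F_def by auto
  have Fidx: "{i \<in> A. fst (\<psi> i) = \<kappa>} = blk \<kappa>" if "\<kappa> \<in> A" for \<kappa>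
  proof
    show "{i \<in> A. fst (\<psi> i) = \<kappa>} \<subseteq> blk \<kappa>"
    proof
      fix i assume "i \<in> {i \<in> A. fst (\<psi> i) = \<kappa>}"
      then have "i \<in> A" "fst (\<psi> i) = \<kappa>" by auto
      then show "i \<in> blk \<kappa>" unfolding blk_def using \<psi>1[of i]
        by (metis mem_Sigma_iff prod.collapse singletonI image_eqI)
    qed
    show "blk \<kappa> \<subseteq> {i \<in> A. fst (\<psi> i) = \<kappa>}"
      unfolding blk_def using \<psi>2 \<phi> that unfolding bij_betw_def by auto
  qed
  have P1: "SFG smul (F k) \<and> F k \<approx> A \<and> closure (gen smul (F k)) = UNIV" if kA: "k \<in> A" for k
  proof (intro conjI)
    show "SFG smul (F k)" using sfg_subset[OF SfA FfA] .
    have "F k \<approx> blk k" unfolding F_def Fidx[OF kA]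
      by (rule inj_on_image_eqpoll_self) (use finj blkA[OF kA] in \<open>auto intro: inj_on_subset\<close>)
    then show "F k \<approx> A" using blk_eq[OF kA] eqpoll_trans by blast
    show "closure (gen smul (F k)) = UNIV"
    proof (rule dense_UNIV)
      fix V :: "'a set" assume V: "open V" "V \<noteq> {}"
      then obtain x where "x \<in> V" by auto
      then obtain U where U: "U \<in> B" "x \<in> U" "U \<subseteq> V" using topological_basisE[OF B(1) V(1)] by blast
      define \<beta> where "\<beta> = hB U"
      have \<beta>A: "\<beta> \<in> A" using hB U unfolding \<beta>_def by auto
      define i where "i = \<phi> (k, \<beta>)"
      have iA: "i \<in> A" using \<phi> kA \<beta>A unfolding i_def bij_betw_def by auto
      have "\<psi> i = (k, \<beta>)" unfolding i_def using \<psi>2 kA \<beta>A by auto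
      moreover have "Ub \<beta> = U" unfolding Ub_def \<beta>_def using U hB by auto
      ultimately have "Ui i = U" unfolding Ui_def by simp
      then have "f i \<in> V" using \<epsilon>[of i] U unfolding f_def by auto
      moreover have "f i \<in> F k" unfolding F_def using iA \<open>\<psi> i = (k, \<beta>)\<close> by auto
      ultimately show "gen smul (F k) \<inter> V \<noteq> {}" using gen.intros(1) by blast
    qed
  qed
  have P2: "F k1 \<inter> F k2 = {}" if "k1 \<in> A" "k2 \<in> A" "k1 \<noteq> k2" for k1 k2
    unfolding F_def using finj that by (auto dest: inj_onD)
  have P3: "SFG smul (\<Union>k\<in>A. F k)" by (rule sfg_subset[OF SfA]) (use FfA in auto)
  have P4: "gen smul (F k1) \<inter> gen smul (F k2) = {0}" if "k1 \<in> A" "k2 \<in> A" "k1 \<noteq> k2" for k1 k2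
    using gen_disj[OF SfA FfA FfA P2[OF that]] gen.intros(2) by blast
  show ?thesis using P1 P2 P3 P4 by blast
qed


theorem theorem4p5:
  fixes smR :: "real \<Rightarrow> 'a::{comm_ring,topological_space} \<Rightarrow> 'a" and AR :: "'a set"
    and smC :: "complex \<Rightarrow> 'b::{comm_ring,topological_space} \<Rightarrow> 'b" and AC :: "'b set"
  shows
   "(topological_algebra smR \<and> SFG smR AR \<and> gen smR AR = UNIV \<and> infinite AR
       \<and> weight_le TYPE('a) AR
     \<longrightarrow> (\<exists>F :: 'a \<Rightarrow> 'a set.
            (\<forall>k\<in>AR. SFG smR (F k) \<and> F k \<approx> AR \<and> closure (gen smR (F k)) = UNIV) \<and>
            (\<forall>k1\<in>AR. \<forall>k2\<in>AR. k1 \<noteq> k2 \<longrightarrow> F k1 \<inter> F k2 = {}) \<and>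
            SFG smR (\<Union>k\<in>AR. F k) \<and>
            (\<forall>k1\<in>AR. \<forall>k2\<in>AR. k1 \<noteq> k2 \<longrightarrow> gen smR (F k1) \<inter> gen smR (F k2) = {0})))
  \<and> (topological_algebra smC \<and> SFG smC AC \<and> gen smC AC = UNIV \<and> infinite AC
       \<and> weight_le TYPE('b) AC
     \<longrightarrow> (\<exists>F :: 'b \<Rightarrow> 'b set.
            (\<forall>k\<in>AC. SFG smC (F k) \<and> F k \<approx> AC \<and> closure (gen smC (F k)) = UNIV) \<and>
            (\<forall>k1\<in>AC. \<forall>k2\<in>AC. k1 \<noteq> k2 \<longrightarrow> F k1 \<inter> F k2 = {}) \<and>
            SFG smC (\<Union>k\<in>AC. F k) \<and>
            (\<forall>k1\<in>AC. \<forall>k2\<in>AC. k1 \<noteq> k2 \<longrightarrow> gen smC (F k1) \<inter> gen smC (F k2) = {0})))"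
  by (intro conjI impI; elim conjE; rule main_thm; assumption)

end
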